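(* Let $(X,f)$ be a dynamical system and $\mathbf{a}=(a_1,\dots,a_r)\in\mathbb{N}^r$. The following are equivalent: (1) $(X,f)$ is $\mathbf{a}$-transitive; (2) $(X,f)$ is $\mathcal{F}[\mathbf{a}]$-transitive; (3) $(X,f)$ is transitive and $\mathcal{F}[\mathbf{a}]$-central.
   Context: A dynamical system is a pair $(X,f)$ with $X$ a compact metric space and $f:X\to X$ continuous. $\mathbb{N}=\{1,2,\dots\}$, $\mathbb{Z}_+=\{0,1,2,\dots\}$. $N(U,V)=\{n\in\mathbb{N}: U\cap f^{-n}(V)\neq\emptyset\}$. $(X,f)$ is transitive if $N(U,V)\neq\emptyset$ for all non-empty open $U,V$. For a family $\mathcal{F}$ of subsets of $\mathbb{N}$, $(X,f)$ is $\mathcal{F}$-transitive if $N(U,V)\in\mathcal{F}$ for all non-empty open $U,V$, and $\mathcal{F}$-central if $N(U,U)\in\mathcal{F}$ for all non-empty open $U$. For $\mathbf{a}\in\mathbb{N}^r$, $f^{(\mathbf{a})}=f^{a_1}\times\dots\times f^{a_r}:X^r\to X^r$, and $(X,f)$ is $\mathbf{a}$-transitive if $(X^r,f^{(\mathbf{a})})$ is transitive. $\mathcal{F}[\mathbf{a}]$ is the collection of all $F\subset\mathbb{N}$ such that for every $(n_1,\dots,n_r)\in\mathbb{Z}_+^r$ there exists $k\in\mathbb{N}$ with $ka_i+n_i\in F$ for all $i=1,\dots,r$. *)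

theory Defs
  imports "HOL-Analysis.Analysis"
begin

definition dyn_system :: "'a::metric_space set \<Rightarrow> ('a \<Rightarrow> 'a) \<Rightarrow> bool" where
  "dyn_system X f \<longleftrightarrow> compact X \<and> continuous_on X f \<and> f ` X \<subseteq> X"

definition hit_times :: "('b \<Rightarrow> 'b) \<Rightarrow> 'b set \<Rightarrow> 'b set \<Rightarrow> nat set" where
  "hit_times g U V = {n. n \<ge> 1 \<and> (\<exists>x\<in>U. (g ^^ n) x \<in> V)}"

definition F_transitive :: "nat set set \<Rightarrow> 'b topology \<Rightarrow> ('b \<Rightarrow> 'b) \<Rightarrow> bool" where
  "F_transitive \<F> T g \<longleftrightarrow>
     (\<forall>U V. openin T U \<and> openin T V \<and> U \<noteq> {} \<and> V \<noteq> {} \<longrightarrow> hit_times g U V \<in> \<F>)"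

definition F_central :: "nat set set \<Rightarrow> 'b topology \<Rightarrow> ('b \<Rightarrow> 'b) \<Rightarrow> bool" where
  "F_central \<F> T g \<longleftrightarrow>
     (\<forall>U. openin T U \<and> U \<noteq> {} \<longrightarrow> hit_times g U U \<in> \<F>)"

definition transitive_sys :: "'b topology \<Rightarrow> ('b \<Rightarrow> 'b) \<Rightarrow> bool" where
  "transitive_sys T g \<longleftrightarrow>
     (\<forall>U V. openin T U \<and> openin T V \<and> U \<noteq> {} \<and> V \<noteq> {} \<longrightarrow> hit_times g U V \<noteq> {})"

definition prod_top :: "'a set \<Rightarrow> nat \<Rightarrow> (nat \<Rightarrow> 'a::topological_space) topology" where
  "prod_top X r = product_topology (\<lambda>_. top_of_set X) {..<r}"

definition prod_map :: "('a \<Rightarrow> 'a) \<Rightarrow> nat \<Rightarrow> (nat \<Rightarrow> nat) \<Rightarrow> (nat \<Rightarrow> 'a) \<Rightarrow> (nat \<Rightarrow> 'a)" where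
  "prod_map f r a = (\<lambda>x. restrict (\<lambda>i. (f ^^ a i) (x i)) {..<r})"

definition a_transitive :: "'a::topological_space set \<Rightarrow> ('a \<Rightarrow> 'a) \<Rightarrow> nat \<Rightarrow> (nat \<Rightarrow> nat) \<Rightarrow> bool" where
  "a_transitive X f r a \<longleftrightarrow> transitive_sys (prod_top X r) (prod_map f r a)"

definition F_a :: "nat \<Rightarrow> (nat \<Rightarrow> nat) \<Rightarrow> nat set set" where
  "F_a r a = {F. \<forall>n::nat \<Rightarrow> nat. \<exists>k::nat. k \<ge> 1 \<and> (\<forall>i<r. k * a i + n i \<in> F)}"

end

theory Submission
  imports Defs
begin

lemma funpow_cont:
  assumes "continuous_on X f" "f ` X \<subseteq> X"
  shows "continuous_on X (f^^n) \<and> (f^^n) ` X \<subseteq> X"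
proof (induction n)
  case 0 then show ?case by (simp add: continuous_on_id)
next
  case (Suc n)
  then show ?case using assms
    by (auto intro: continuous_on_compose2[of X f X "f^^n"] simp: image_subset_iff)
qed

lemma preimage_open:
  assumes "continuous_on X f" "f ` X \<subseteq> X" "openin (top_of_set X) V"
  shows "openin (top_of_set X) (X \<inter> (f^^n) -` V)"
  using funpow_cont[OF assms(1,2), of n] assms(3)
  by (intro continuous_openin_preimage[where T=X]) auto

lemma prod_map_pow:
  assumes "x \<in> extensional {..<r}"
  shows "(prod_map f r a ^^ n) x = restrict (\<lambda>i. (f^^(n * a i)) (x i)) {..<r}"
proof (induction n)
  case 0 then show ?case using assms by (auto simp: extensional_def restrict_def)
next
  case (Suc n)
  have "(prod_map f r a ^^ Suc n) x = prod_map f r a ((prod_map f r a ^^ n) x)" by simp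
  also have "\<dots> = restrict (\<lambda>i. (f^^(Suc n * a i)) (x i)) {..<r}"
    unfolding Suc.IH by (auto simp: prod_map_def funpow_add)
  finally show ?case .
qed

lemma chain:
  assumes "transitive_sys (top_of_set X) f" "continuous_on X f" "f ` X \<subseteq> X"
    "openin (top_of_set X) W0" "W0 \<noteq> {}"
    "\<forall>j<(m::nat). openin (top_of_set X) (T j) \<and> T j \<noteq> {}"
  shows "\<exists>W e. openin (top_of_set X) W \<and> W \<noteq> {} \<and> W \<subseteq> W0 \<and> (\<forall>j<m. \<forall>y\<in>W. (f^^e j) y \<in> T j)"
  using assms(6)
proof (induction m)
  case 0 then show ?case using assms(4,5) by blast
next
  case (Suc m)
  then obtain W e where W: "openin (top_of_set X) W" "W \<noteq> {}" "W \<subseteq> W0"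
     "\<forall>j<m. \<forall>y\<in>W. (f^^e j) y \<in> T j" by auto
  have Tm: "openin (top_of_set X) (T m)" "T m \<noteq> {}" using Suc.prems by auto
  from assms(1) W(1,2) Tm obtain n x where "x \<in> W" "(f^^n) x \<in> T m"
    unfolding transitive_sys_def hit_times_def by blast
  define W' where "W' = W \<inter> (X \<inter> (f^^n) -` T m)"
  have "openin (top_of_set X) W'" unfolding W'_def
    using W(1) preimage_open[OF assms(2,3) Tm(1)] by blast
  moreover have "W' \<noteq> {}" using \<open>x \<in> W\<close> \<open>(f^^n) x \<in> T m\<close> W(1) openin_subset
    unfolding W'_def by fastforce
  moreover have "W' \<subseteq> W0" using W(3) W'_def by auto
  moreover have "\<forall>j<Suc m. \<forall>y\<in>W'. ((f^^((e(m:=n)) j)) y \<in> T j)"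
    using W(4) unfolding W'_def by (auto simp: less_Suc_eq)
  ultimately show ?case by blast
qed

lemma openin_box:
  assumes "\<forall>i<r. openin (top_of_set X) (S i)"
  shows "openin (prod_top X r) (PiE {..<r} S)"
  unfolding prod_top_def using assms by (simp add: openin_PiE_gen)

lemma surj_f:
  assumes ds: "dyn_system X f" and r: "r \<ge> 1" and a: "\<forall>i<r. a i \<ge> 1"
    and at: "a_transitive X f r a"
  shows "f ` X = X"
proof (rule ccontr)
  assume ne: "f ` X \<noteq> X"
  have sub: "f ` X \<subseteq> X" and cpt: "compact X" and ct: "continuous_on X f"
    using ds unfolding dyn_system_def by auto
  have "closed (f ` X)" using compact_continuous_image[OF ct cpt] compact_imp_closed by blast
  hence "openin (top_of_set X) (X - f ` X)"
  proof -
    have "X - f ` X = X \<inter> (- f ` X)" by auto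
    thus ?thesis using \<open>closed (f ` X)\<close> using openin_open_Int[of "- f ` X" X] by (simp add: open_Compl)
  qed
  define V where "V = X - f ` X"
  have Vo: "openin (top_of_set X) V" using \<open>openin _ (X - f ` X)\<close> V_def by simp
  have Vne: "V \<noteq> {}" using ne sub V_def by auto
  have o1: "openin (prod_top X r) (PiE {..<r} (\<lambda>_. X))" by (rule openin_box) auto
  have o2: "openin (prod_top X r) (PiE {..<r} (\<lambda>_. V))" by (rule openin_box) (use Vo in auto)
  have n1: "PiE {..<r} (\<lambda>_. X) \<noteq> {}" using Vne V_def by (auto simp: PiE_eq_empty_iff)
  have n2: "PiE {..<r} (\<lambda>_. V) \<noteq> {}" using Vne by (auto simp: PiE_eq_empty_iff)
  have "hit_times (prod_map f r a) (PiE {..<r} (\<lambda>_. X)) (PiE {..<r} (\<lambda>_. V)) \<noteq> {}"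
    using at o1 o2 n1 n2 unfolding a_transitive_def transitive_sys_def by simp
  then obtain m x where m: "m \<ge> 1" and x: "x \<in> PiE {..<r} (\<lambda>_. X)"
    and hx: "(prod_map f r a ^^ m) x \<in> PiE {..<r} (\<lambda>_. V)"
    unfolding hit_times_def by auto
  have "(prod_map f r a ^^ m) x = restrict (\<lambda>i. (f^^(m * a i)) (x i)) {..<r}"
    using x by (intro prod_map_pow) (simp add: PiE_iff)
  with hx r have hv: "(f^^(m * a 0)) (x 0) \<in> V" by (auto simp: PiE_iff)
  have "m * a 0 \<ge> 1" using m a r by simp
  define p where "p = m * a 0 - 1"
  have p: "m * a 0 = Suc p" unfolding p_def using \<open>m * a 0 \<ge> 1\<close> by linarith
  have "x 0 \<in> X" using x r by (simp add: PiE_iff)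
  hence "(f^^p) (x 0) \<in> X" using funpow_cont[OF ct sub, of p] by auto
  hence "(f^^(m * a 0)) (x 0) \<in> f ` X" unfolding p by simp
  thus False using hv V_def by auto
qed

lemma dir12:
  assumes ds: "dyn_system X f" and r: "r \<ge> 1" and a: "\<forall>i<r. a i \<ge> 1"
    and at: "a_transitive X f r a"
  shows "F_transitive (F_a r a) (top_of_set X) f"
  unfolding F_transitive_def F_a_def
proof (intro allI impI CollectI)
  fix U V :: "'a set" and n :: "nat \<Rightarrow> nat"
  assume UV: "openin (top_of_set X) U \<and> openin (top_of_set X) V \<and> U \<noteq> {} \<and> V \<noteq> {}"
  have sub: "f ` X \<subseteq> X" and ct: "continuous_on X f"
    using ds unfolding dyn_system_def by auto
  have surj: "(f^^m) ` X = X" for m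
  proof (induction m)
    case (Suc m) then show ?case proof -
      have "(f^^Suc m) ` X = f ` ((f^^m) ` X)" by (simp add: image_image)
      thus ?thesis using Suc surj_f[OF assms] by simp
    qed
  qed simp
  define Vi where "Vi (i::nat) = X \<inter> (f^^n i) -` V" for i
  have Vo: "\<forall>i<r. openin (top_of_set X) (Vi i)" unfolding Vi_def
    using preimage_open[OF ct sub] UV by blast
  have Vne: "Vi i \<noteq> {}" for i
  proof -
    obtain v where "v \<in> V" using UV by auto
    hence "v \<in> X" using UV openin_subset by fastforce
    then obtain y where "y \<in> X" "(f^^n i) y = v" using surj[of "n i"] by (metis imageE)
    thus ?thesis using \<open>v \<in> V\<close> Vi_def by auto
  qed
  have o1: "openin (prod_top X r) (PiE {..<r} (\<lambda>_. U))" by (rule openin_box) (use UV in auto)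
  have o2: "openin (prod_top X r) (PiE {..<r} Vi)" by (rule openin_box) (use Vo in auto)
  have n1: "PiE {..<r} (\<lambda>_. U) \<noteq> {}" using UV by (auto simp: PiE_eq_empty_iff)
  have n2: "PiE {..<r} Vi \<noteq> {}" using Vne by (auto simp: PiE_eq_empty_iff)
  have "hit_times (prod_map f r a) (PiE {..<r} (\<lambda>_. U)) (PiE {..<r} Vi) \<noteq> {}"
    using at o1 o2 n1 n2 unfolding a_transitive_def transitive_sys_def by simp
  then obtain m x where m: "m \<ge> 1" and x: "x \<in> PiE {..<r} (\<lambda>_. U)"
    and hx: "(prod_map f r a ^^ m) x \<in> PiE {..<r} Vi"
    unfolding hit_times_def by auto
  have "(prod_map f r a ^^ m) x = restrict (\<lambda>i. (f^^(m * a i)) (x i)) {..<r}"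
    using x by (intro prod_map_pow) (simp add: PiE_iff)
  with hx have "\<forall>i<r. (f^^(n i)) ((f^^(m * a i)) (x i)) \<in> V" by (auto simp: PiE_iff Vi_def)
  hence "\<forall>i<r. (f^^(m * a i + n i)) (x i) \<in> V" by (simp add: funpow_add add.commute)
  moreover have "\<forall>i<r. m * a i + n i \<ge> 1" using m a by (simp add: Suc_le_eq)
  ultimately have "\<forall>i<r. m * a i + n i \<in> hit_times f U V" using x
    unfolding hit_times_def by (auto simp: PiE_iff)
  thus "\<exists>k\<ge>1. \<forall>i<r. k * a i + n i \<in> hit_times f U V" using m by (intro exI[of _ m]) simp
qed

lemma dir23:
  assumes r: "r \<ge> 1" and ft: "F_transitive (F_a r a) (top_of_set X) f"
  shows "transitive_sys (top_of_set X) f \<and> F_central (F_a r a) (top_of_set X) f"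
proof
  show "F_central (F_a r a) (top_of_set X) f" using ft unfolding F_transitive_def F_central_def by simp
  show "transitive_sys (top_of_set X) f" unfolding transitive_sys_def
  proof (intro allI impI)
    fix U V assume UV: "openin (top_of_set X) U \<and> openin (top_of_set X) V \<and> U \<noteq> {} \<and> V \<noteq> {}"
    hence "hit_times f U V \<in> F_a r a" using ft unfolding F_transitive_def by simp
    hence "\<forall>n::nat\<Rightarrow>nat. \<exists>k. k \<ge> 1 \<and> (\<forall>i<r. k * a i + n i \<in> hit_times f U V)"
      unfolding F_a_def by simp
    from spec[OF this, of "\<lambda>_. 0"] obtain k where "\<forall>i<r. k * a i + 0 \<in> hit_times f U V"
      by blast
    moreover have "0 < r" using r by simp
    ultimately show "hit_times f U V \<noteq> {}" by blast
  qed
qed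

lemma dir31:
  assumes ds: "dyn_system X f" and r: "r \<ge> 1" and a: "\<forall>i<r. a i \<ge> 1"
    and tr: "transitive_sys (top_of_set X) f" and fc: "F_central (F_a r a) (top_of_set X) f"
  shows "a_transitive X f r a"
  unfolding a_transitive_def transitive_sys_def
proof (intro allI impI)
  fix S T assume ST: "openin (prod_top X r) S \<and> openin (prod_top X r) T \<and> S \<noteq> {} \<and> T \<noteq> {}"
  have sub: "f ` X \<subseteq> X" and ct: "continuous_on X f"
    using ds unfolding dyn_system_def by auto
  obtain x0 where "x0 \<in> S" using ST by auto
  then obtain Ub where Ub: "\<forall>i\<in>{..<r}. openin (top_of_set X) (Ub i)" "x0 \<in> PiE {..<r} Ub" "PiE {..<r} Ub \<subseteq> S"
    using ST unfolding prod_top_def openin_product_topology_alt by blast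
  obtain z0 where "z0 \<in> T" using ST by auto
  then obtain Vb where Vb: "\<forall>i\<in>{..<r}. openin (top_of_set X) (Vb i)" "z0 \<in> PiE {..<r} Vb" "PiE {..<r} Vb \<subseteq> T"
    using ST unfolding prod_top_def openin_product_topology_alt by blast
  have Une: "Ub i \<noteq> {}" if "i < r" for i using Ub(2) that by (auto simp: PiE_iff)
  have Vne: "Vb i \<noteq> {}" if "i < r" for i using Vb(2) that by (auto simp: PiE_iff)
  define TT where "TT j = (if j < r then Ub j else Vb (j - r))" for j
  have TT: "\<forall>j<2*r. openin (top_of_set X) (TT j) \<and> TT j \<noteq> {}"
    unfolding TT_def using Ub(1) Vb(1) Une Vne by auto
  have Xne: "X \<noteq> {}" using Une[of 0] Ub(1) r openin_subset by fastforce
  have Xo: "openin (top_of_set X) X" by simp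
  obtain W e where W: "openin (top_of_set X) W" "W \<noteq> {}" "W \<subseteq> X"
    "\<forall>j<2*r. \<forall>y\<in>W. (f^^e j) y \<in> TT j"
    using chain[OF tr ct sub Xo Xne TT] by blast
  define c where "c i = e i" for i
  define d where "d i = e (r + i)" for i
  have cU: "\<forall>y\<in>W. (f^^c i) y \<in> Ub i" if "i < r" for i
  proof -
    have "i < 2 * r" using that by simp
    hence "\<forall>y\<in>W. (f^^e i) y \<in> TT i" using W(4) by blast
    thus ?thesis using that unfolding c_def TT_def by simp
  qed
  have dV: "\<forall>y\<in>W. (f^^d i) y \<in> Vb i" if "i < r" for i
  proof -
    have "r + i < 2 * r" using that by simp
    hence "\<forall>y\<in>W. (f^^e (r + i)) y \<in> TT (r + i)" using W(4) by blast
    thus ?thesis unfolding d_def TT_def by simp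
  qed
  define L where "L = (\<Sum>i<r. d i)"
  define n where "n i = L * a i + c i - d i" for i
  have "hit_times f W W \<in> F_a r a" using fc W(1,2) unfolding F_central_def by simp
  hence "\<forall>n::nat\<Rightarrow>nat. \<exists>k. k \<ge> 1 \<and> (\<forall>i<r. k * a i + n i \<in> hit_times f W W)"
    unfolding F_a_def by simp
  from spec[OF this, of n] obtain k where k: "k \<ge> 1" "\<forall>i<r. k * a i + n i \<in> hit_times f W W"
    by blast
  hence "\<forall>i\<in>{..<r}. \<exists>y. y \<in> W \<and> (f^^(k * a i + n i)) y \<in> W"
    unfolding hit_times_def by auto
  from bchoice[OF this] obtain yf where yf: "\<forall>i\<in>{..<r}. yf i \<in> W \<and> (f^^(k * a i + n i)) (yf i) \<in> W"
    by blast
  define x where "x = restrict (\<lambda>i. (f^^c i) (yf i)) {..<r}"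
  have "x \<in> PiE {..<r} Ub" unfolding x_def using cU yf by (simp add: PiE_iff)
  hence xS: "x \<in> S" using Ub(3) by blast
  define m where "m = k + L"
  have xe: "x \<in> extensional {..<r}" unfolding x_def by simp
  have "(prod_map f r a ^^ m) x \<in> PiE {..<r} Vb"
    unfolding prod_map_pow[OF xe]
  proof (subst restrict_PiE_iff, intro ballI)
    fix i assume "i \<in> {..<r}"
    hence i: "i < r" by simp
    have "d i \<le> L" unfolding L_def using i by (intro member_le_sum) auto
    also have "L \<le> L * a i" using a i by simp
    finally have "m * a i + c i = d i + (k * a i + n i)"
      unfolding m_def n_def by (simp add: algebra_simps)
    have e1: "(f^^(m * a i)) ((f^^c i) (yf i)) = (f^^(m * a i + c i)) (yf i)"
      by (simp add: funpow_add)
    have e2: "(f^^(d i + (k * a i + n i))) (yf i) = (f^^(d i)) ((f^^(k * a i + n i)) (yf i))"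
      by (simp add: funpow_add)
    have "(f^^(m * a i)) (x i) = (f^^(d i)) ((f^^(k * a i + n i)) (yf i))"
      unfolding x_def using i e1 e2 \<open>m * a i + c i = _\<close> by simp
    thus "(f^^(m * a i)) (x i) \<in> Vb i" using dV[OF i] yf i by auto
  qed
  hence "(prod_map f r a ^^ m) x \<in> T" using Vb(3) by blast
  moreover have "m \<ge> 1" using k unfolding m_def by simp
  ultimately show "hit_times (prod_map f r a) S T \<noteq> {}" using xS unfolding hit_times_def by blast
qed

theorem theorem4p6:
  fixes X :: "'a::metric_space set" and f :: "'a \<Rightarrow> 'a"
    and r :: nat and a :: "nat \<Rightarrow> nat"
  assumes "dyn_system X f"
    and "r \<ge> 1"
    and "\<forall>i<r. a i \<ge> 1"
  shows "(a_transitive X f r a \<longleftrightarrow> F_transitive (F_a r a) (top_of_set X) f)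
       \<and> (F_transitive (F_a r a) (top_of_set X) f \<longleftrightarrow>
            transitive_sys (top_of_set X) f \<and> F_central (F_a r a) (top_of_set X) f)"
  using dir12[OF assms] dir23[OF assms(2)] dir31[OF assms] by blast

end
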